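(* Let $x_0\in C^\eta_p$ (some $\eta\in\mathbb{N}^p$) be continuous on $[-\tau,0]$, and let $x:[-\tau,T]\to\mathbb{R}^d$ be a solution with initial segment $x_0$. Let $m,\bar m\in\mathbb{N}$ with $\bar m\ge1$, $0<\varepsilon_1,\varepsilon_2<h$, $t_1=mh+\varepsilon_1$, $t_2=(m+\bar m)h+\varepsilon_2$, with $(m+\bar m+1)h+\varepsilon_2\le T$, and $n=\lfloor m/p\rfloor-1\ge0$. For $k\in\{0,\dots,n+1\}$ and $i\in\{0,\dots,p\}$ let $L^{[k]}_i$, $C^{[k]}_{i,j}$ ($j=1,\dots,\bar m$), $R^{[k]}_i$, $\widetilde R^{[k]}_i$ be boxes such that $x^{[k]}(s)$ lies in $L^{[k]}_i$ for $s\in[(m-i)h+\varepsilon_1,(m-i+1)h]$, in $C^{[k]}_{i,j}$ for $s\in[(m-i+j)h,(m-i+j+1)h]$, in $R^{[k]}_i$ for $s\in[(m-i+\bar m)h,(m-i+\bar m)h+\varepsilon_2]$, and in $\widetilde R^{[k]}_i$ for $s\in[(m-i+\bar m+1)h,(m-i+\bar m+1)h+\varepsilon_2]$. Then for every $t\in[t_1,t_2]$: (a) $x_t\in C^n_p$ and $x_t\in C^{n+1}([-\tau,0])$; (b) $z(x_t)\in\mathrm{hull}\big(L^{[0]}_0,C^{[0]}_{0,1},\dots,C^{[0]}_{0,\bar m-1},R^{[0]}_0\big)$; (c) for $i\in\{1,\dots,p\}$, $k\in\{0,\dots,n\}$: $j_{i,[k]}(x_t)\in\mathrm{hull}\big(L^{[k]}_i,C^{[k]}_{i,1},\dots,C^{[k]}_{i,\bar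 m-1},R^{[k]}_i\big)$; (d) for $i\in\{1,\dots,p\}$ and $s\in[0,h)$: $\xi_i(x_t)(s)\in\mathrm{hull}\big(L^{[n+1]}_i,C^{[n+1]}_{i,1},\dots,C^{[n+1]}_{i,\bar m},\widetilde R^{[n+1]}_i\big)$.
   Context: Fix integers $d\ge1$, $p\ge1$, a delay $\tau>0$, and set $h=\tau/p$, grid points $t_i=-ih$. Let $f:\mathbb{R}^d\times\mathbb{R}^d\to\mathbb{R}^d$ be $C^\infty$ and consider the DDE $x'(t)=f(x(t),x(t-\tau))$. Segments: $x_t(s)=x(t+s)$, $s\in[-\tau,0]$. For $g$ of class $C^k$, $g^{[k]}:=g^{(k)}/k!$ (one-sided derivatives at endpoints). For $\eta\in\mathbb{N}^p$, $C^\eta_p$ is the set of $x:[-\tau,0]\to\mathbb{R}^d$ such that for each $i$ the restriction of $x$ to $[t_i,t_i+h)$ coincides with the restriction of some $\tilde x_i\in C^{\eta_i+1}([t_i,t_i+h])$; for $s\in[t_i,t_i+h)$, $x^{[k]}(s):=\tilde x_i^{[k]}(s)$. $C^n_p:=C^{(n,\dots,n)}_p$. For $x\in C^n_p$: $z(x)=x(0)$, $j_{i,[k]}(x)=x^{[k]}(t_i)$ for $0\le k\le n$, and $\xi_i(x)(s)=x^{[n+1]}(t_i+s)$ for $s\in[0,h)$. A solution on $[-\tau,T]$ with initial segment $x_0$ is $x:[-\tau,T]\to\mathbb{R}^d$ with $x|_{[-\tau,0]}=x_0$, continuous on $[0,T]$, whose right derivative at each $t\in[0,T)$ exists and equals $f(x(t),x(t-\tau))$.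 A box is a product of $d$ compact intervals; $\mathrm{hull}(A_1,\dots,A_r)$ is the smallest box containing $A_1\cup\dots\cup A_r$. *)

theory Defs
  imports "HOL-Analysis.Analysis"
begin

primrec Ck_map :: "nat \<Rightarrow> ('a::real_normed_vector \<Rightarrow> 'b::real_normed_vector) \<Rightarrow> bool" where
  "Ck_map 0 f = continuous_on UNIV f"
| "Ck_map (Suc k) f = (\<exists>D. (\<forall>x. (f has_derivative D x) (at x)) \<and> (\<forall>v. Ck_map k (\<lambda>x. D x v)))"

definition smooth_map :: "('a::real_normed_vector \<Rightarrow> 'b::real_normed_vector) \<Rightarrow> bool" where
  "smooth_map f \<longleftrightarrow> (\<forall>k. Ck_map k f)"

text \<open>D is a family of derivatives of g up to order k on S (one-sided at endpoints,
via derivatives within S), with D k continuous on S.\<close>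
definition derivs_on :: "nat \<Rightarrow> real set \<Rightarrow> (real \<Rightarrow> 'a::real_normed_vector) \<Rightarrow> (nat \<Rightarrow> real \<Rightarrow> 'a) \<Rightarrow> bool" where
  "derivs_on k S g D \<longleftrightarrow>
     (\<forall>s\<in>S. D 0 s = g s) \<and>
     (\<forall>j<k. \<forall>s\<in>S. (D j has_vector_derivative D (Suc j) s) (at s within S)) \<and>
     continuous_on S (D k)"

definition Ck_on :: "nat \<Rightarrow> real set \<Rightarrow> (real \<Rightarrow> 'a::real_normed_vector) \<Rightarrow> bool" where
  "Ck_on k S g \<longleftrightarrow> (\<exists>D. derivs_on k S g D)"

text \<open>g^[k](s) = g^(k)(s)/k!, the k-th derivative taken within S.\<close>
definition tder :: "nat \<Rightarrow> real set \<Rightarrow> (real \<Rightarrow> 'a::real_normed_vector) \<Rightarrow> real \<Rightarrow> 'a" where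
  "tder k S g s = (SOME D. derivs_on k S g D) k s /\<^sub>R fact k"

definition gridpt :: "nat \<Rightarrow> real \<Rightarrow> nat \<Rightarrow> real" where
  "gridpt p \<tau> i = - real i * (\<tau> / real p)"

definition piece :: "nat \<Rightarrow> real \<Rightarrow> nat \<Rightarrow> real set" where
  "piece p \<tau> i = {gridpt p \<tau> i ..< gridpt p \<tau> i + \<tau> / real p}"

definition Cp :: "nat \<Rightarrow> real \<Rightarrow> (nat \<Rightarrow> nat) \<Rightarrow> (real \<Rightarrow> 'a::real_normed_vector) \<Rightarrow> bool" where
  "Cp p \<tau> \<eta> x \<longleftrightarrow>
     (\<forall>i\<in>{1..p}. \<exists>xt. Ck_on (\<eta> i + 1) {gridpt p \<tau> i .. gridpt p \<tau> i + \<tau> / real p} xt \<and>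
                      (\<forall>s\<in>piece p \<tau> i. x s = xt s))"

text \<open>x^[k](s) for s in [t_i, t_i+h): derivative of (the restriction of) x to that piece.\<close>
definition z_fun :: "(real \<Rightarrow> 'a) \<Rightarrow> 'a" where
  "z_fun x = x 0"

definition j_fun :: "nat \<Rightarrow> real \<Rightarrow> nat \<Rightarrow> nat \<Rightarrow> (real \<Rightarrow> 'a::real_normed_vector) \<Rightarrow> 'a" where
  "j_fun p \<tau> i k x = tder k (piece p \<tau> i) x (gridpt p \<tau> i)"

definition xi_fun :: "nat \<Rightarrow> real \<Rightarrow> nat \<Rightarrow> nat \<Rightarrow> (real \<Rightarrow> 'a::real_normed_vector) \<Rightarrow> real \<Rightarrow> 'a" where
  "xi_fun p \<tau> n i x s = tder (Suc n) (piece p \<tau> i) x (gridpt p \<tau> i + s)"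

definition seg :: "(real \<Rightarrow> 'a) \<Rightarrow> real \<Rightarrow> real \<Rightarrow> 'a" where
  "seg x t = (\<lambda>s. x (t + s))"

definition is_solution :: "('a::real_normed_vector \<Rightarrow> 'a \<Rightarrow> 'a) \<Rightarrow> real \<Rightarrow> real \<Rightarrow> (real \<Rightarrow> 'a) \<Rightarrow> (real \<Rightarrow> 'a) \<Rightarrow> bool" where
  "is_solution f \<tau> T x0 x \<longleftrightarrow>
     (\<forall>s\<in>{-\<tau>..0}. x s = x0 s) \<and>
     continuous_on {0..T} x \<and>
     (\<forall>t\<in>{0..<T}. (x has_vector_derivative f (x t) (x (t - \<tau>))) (at_right t))"

definition is_box :: "'a::euclidean_space set \<Rightarrow> bool" where
  "is_box B \<longleftrightarrow> (\<exists>a b. B = cbox a b)"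

definition box_hull :: "'a::euclidean_space set \<Rightarrow> 'a set" where
  "box_hull A = is_box hull A"

end

theory Submission
  imports Defs
begin


lemma derivs_on_cong: "derivs_on k S g D \<Longrightarrow> (\<And>s. s\<in>S \<Longrightarrow> g s = g2 s) \<Longrightarrow> derivs_on k S g2 D"
  unfolding derivs_on_def by auto

lemma Ck_on_cong: "Ck_on k S g \<Longrightarrow> (\<And>s. s\<in>S \<Longrightarrow> g s = g2 s) \<Longrightarrow> Ck_on k S g2"
  unfolding Ck_on_def using derivs_on_cong by blast

lemma Ck_on_0: "Ck_on 0 S g \<longleftrightarrow> continuous_on S g"
proof
  assume "Ck_on 0 S g" then obtain D where "derivs_on 0 S g D" unfolding Ck_on_def by auto
  then show "continuous_on S g" unfolding derivs_on_def using continuous_on_cong by force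
next
  assume "continuous_on S g" then have "derivs_on 0 S g (\<lambda>_. g)" unfolding derivs_on_def by auto
  then show "Ck_on 0 S g" unfolding Ck_on_def by blast
qed

lemma derivs_on_SucI:
  assumes "\<And>s. s\<in>S \<Longrightarrow> (g has_vector_derivative g' s) (at s within S)"
    and "derivs_on k S g' E"
  shows "derivs_on (Suc k) S g (\<lambda>j. case j of 0 \<Rightarrow> g | Suc j \<Rightarrow> E j)"
  unfolding derivs_on_def
proof (intro conjI ballI allI impI)
  fix j s assume j: "j < Suc k" and s: "s \<in> S"
  show "((case j of 0 \<Rightarrow> g | Suc j \<Rightarrow> E j) has_vector_derivative
         (case Suc j of 0 \<Rightarrow> g | Suc j \<Rightarrow> E j) s) (at s within S)"
  proof (cases j)
    case 0
    have "E 0 s = g' s" using assms(2) s unfolding derivs_on_def by auto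
    then show ?thesis using 0 assms(1)[OF s] by simp
  next
    case (Suc j') then show ?thesis using assms(2) s j unfolding derivs_on_def by auto
  qed
next
  show "continuous_on S ((case Suc k of 0 \<Rightarrow> g | Suc j \<Rightarrow> E j))" using assms(2) unfolding derivs_on_def by auto
qed auto

lemma derivs_on_SucD:
  assumes "derivs_on (Suc k) S g D"
  shows "(\<forall>s\<in>S. (g has_vector_derivative D 1 s) (at s within S)) \<and> derivs_on k S (D 1) (\<lambda>j. D (Suc j))"
proof -
  have h: "\<forall>s\<in>S. D 0 s = g s" "\<forall>j<Suc k. \<forall>s\<in>S. (D j has_vector_derivative D (Suc j) s) (at s within S)"
    "continuous_on S (D (Suc k))" using assms unfolding derivs_on_def by auto
  have "(g has_vector_derivative D 1 s) (at s within S)" if "s\<in>S" for s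
    using has_vector_derivative_transform[of s S g "D 0" "D 1 s"] h that by auto
  moreover have "derivs_on k S (D 1) (\<lambda>j. D (Suc j))" unfolding derivs_on_def using h by auto
  ultimately show ?thesis by blast
qed

lemma Ck_on_Suc: "Ck_on (Suc k) S g \<longleftrightarrow>
   (\<exists>g'. (\<forall>s\<in>S. (g has_vector_derivative g' s) (at s within S)) \<and> Ck_on k S g')"
  unfolding Ck_on_def using derivs_on_SucD derivs_on_SucI by metis

lemma Ck_on_imp_cont: assumes "Ck_on k S g" shows "continuous_on S g"
proof (cases k)
  case 0 then show ?thesis using Ck_on_0 assms by auto
next
  case (Suc k')
  then obtain g' where "\<forall>s\<in>S. (g has_vector_derivative g' s) (at s within S)" using Suc Ck_on_Suc assms by metis
  then show ?thesis unfolding continuous_on_eq_continuous_within using has_vector_derivative_continuous by blast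
qed

lemma Ck_on_mono: "Ck_on (Suc k) S g \<Longrightarrow> Ck_on k S g"
proof (induction k arbitrary: g)
  case 0 then show ?case using Ck_on_imp_cont Ck_on_0 by blast
next
  case (Suc k)
  then obtain g' where "\<forall>s\<in>S. (g has_vector_derivative g' s) (at s within S)" "Ck_on (Suc k) S g'"
    using Ck_on_Suc by blast
  then show ?case using Suc.IH Ck_on_Suc by blast
qed

lemma Ck_on_mono_le: "Ck_on k S g \<Longrightarrow> j \<le> k \<Longrightarrow> Ck_on j S g"
  by (induction k) (auto simp: le_Suc_eq dest: Ck_on_mono)

lemma Ck_on_subset: "Ck_on k S g \<Longrightarrow> S' \<subseteq> S \<Longrightarrow> Ck_on k S' g"
proof (induction k arbitrary: g)
  case 0 then show ?case using Ck_on_0 continuous_on_subset by blast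
next
  case (Suc k)
  then obtain g' where "\<forall>s\<in>S. (g has_vector_derivative g' s) (at s within S)" "Ck_on k S g'"
    using Ck_on_Suc by blast
  then show ?case using Suc has_vector_derivative_within_subset Ck_on_Suc by (metis subsetD)
qed

lemma Ck_on_const: "Ck_on k S (\<lambda>s. c)"
proof (induction k arbitrary: c)
  case 0 then show ?case by (simp add: Ck_on_0)
next
  case (Suc k) then show ?case using Ck_on_Suc[of k S "\<lambda>s. c"] by (metis has_vector_derivative_const)
qed

lemma Ck_on_add: "Ck_on k S a \<Longrightarrow> Ck_on k S b \<Longrightarrow> Ck_on k S (\<lambda>s. a s + b s)"
proof (induction k arbitrary: a b)
  case 0 then show ?case by (simp add: Ck_on_0 continuous_on_add)
next
  case (Suc k)
  obtain a' where a: "\<forall>s\<in>S. (a has_vector_derivative a' s) (at s within S)" "Ck_on k S a'"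
    using Suc.prems Ck_on_Suc by blast
  obtain b' where b: "\<forall>s\<in>S. (b has_vector_derivative b' s) (at s within S)" "Ck_on k S b'"
    using Suc.prems Ck_on_Suc by blast
  show ?case unfolding Ck_on_Suc
    by (rule exI[of _ "\<lambda>s. a' s + b' s"]) (use a b Suc.IH in \<open>auto intro: has_vector_derivative_add\<close>)
qed

lemma Ck_on_sum: "finite A \<Longrightarrow> (\<And>i. i\<in>A \<Longrightarrow> Ck_on k S (g i)) \<Longrightarrow> Ck_on k S (\<lambda>s. \<Sum>i\<in>A. g i s)"
  by (induction A rule: finite_induct) (auto intro: Ck_on_add Ck_on_const)

lemma Ck_on_linear: "bounded_linear L \<Longrightarrow> Ck_on k S g \<Longrightarrow> Ck_on k S (\<lambda>s. L (g s))"
proof (induction k arbitrary: g)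
  case 0 then show ?case by (simp add: Ck_on_0 bounded_linear.continuous_on)
next
  case (Suc k)
  obtain g' where a: "\<forall>s\<in>S. (g has_vector_derivative g' s) (at s within S)" "Ck_on k S g'"
    using Suc.prems Ck_on_Suc by blast
  show ?case unfolding Ck_on_Suc
    by (rule exI[of _ "\<lambda>s. L (g' s)"]) (use a Suc in \<open>auto intro: bounded_linear.has_vector_derivative\<close>)
qed

lemma Ck_on_scaleR: "Ck_on k S (a :: real \<Rightarrow> real) \<Longrightarrow> Ck_on k S b \<Longrightarrow> Ck_on k S (\<lambda>s. a s *\<^sub>R b s)"
proof (induction k arbitrary: a b)
  case 0 then show ?case by (simp add: Ck_on_0 continuous_on_scaleR)
next
  case (Suc k)
  obtain a' where a: "\<forall>s\<in>S. (a has_vector_derivative a' s) (at s within S)" "Ck_on k S a'"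
    using Suc.prems Ck_on_Suc by blast
  obtain b' where b: "\<forall>s\<in>S. (b has_vector_derivative b' s) (at s within S)" "Ck_on k S b'"
    using Suc.prems Ck_on_Suc by blast
  have am: "Ck_on k S a" "Ck_on k S b" using Suc.prems Ck_on_mono by blast+
  show ?case unfolding Ck_on_Suc
  proof (rule exI[of _ "\<lambda>s. a s *\<^sub>R b' s + a' s *\<^sub>R b s"], intro conjI ballI)
    fix s assume "s \<in> S"
    then show "((\<lambda>s. a s *\<^sub>R b s) has_vector_derivative a s *\<^sub>R b' s + a' s *\<^sub>R b s) (at s within S)"
      using a b by (auto intro!: has_vector_derivative_scaleR simp: has_real_derivative_iff_has_vector_derivative)
  next
    show "Ck_on k S (\<lambda>s. a s *\<^sub>R b' s + a' s *\<^sub>R b s)"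
      using Suc.IH am a b by (intro Ck_on_add) auto
  qed
qed

lemma Ck_on_Pair: "Ck_on k S a \<Longrightarrow> Ck_on k S b \<Longrightarrow> Ck_on k S (\<lambda>s. (a s, b s))"
proof (induction k arbitrary: a b)
  case 0 then show ?case by (simp add: Ck_on_0 continuous_on_Pair)
next
  case (Suc k)
  obtain a' where a: "\<forall>s\<in>S. (a has_vector_derivative a' s) (at s within S)" "Ck_on k S a'"
    using Suc.prems Ck_on_Suc by blast
  obtain b' where b: "\<forall>s\<in>S. (b has_vector_derivative b' s) (at s within S)" "Ck_on k S b'"
    using Suc.prems Ck_on_Suc by blast
  show ?case unfolding Ck_on_Suc
    by (rule exI[of _ "\<lambda>s. (a' s, b' s)"]) (use a b Suc.IH in \<open>auto intro: has_vector_derivative_Pair\<close>)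
qed

lemma Ck_on_shift: "Ck_on k S g \<Longrightarrow> (\<And>s. s\<in>S' \<Longrightarrow> s - c \<in> S) \<Longrightarrow> Ck_on k S' (\<lambda>s. g (s - c))"
proof (induction k arbitrary: g)
  case 0 then show ?case
    by (auto simp: Ck_on_0 intro!: continuous_on_compose2[of S g] continuous_intros)
next
  case (Suc k)
  obtain g' where a: "\<forall>s\<in>S. (g has_vector_derivative g' s) (at s within S)" "Ck_on k S g'"
    using Suc.prems Ck_on_Suc by blast
  show ?case unfolding Ck_on_Suc
  proof (rule exI[of _ "\<lambda>s. g' (s - c)"], intro conjI ballI)
    fix s assume s: "s \<in> S'"
    have "((\<lambda>s. s - c) has_vector_derivative 1) (at s within S')"
      by (auto intro!: derivative_eq_intros)
    moreover have "(g has_vector_derivative g' (s - c)) (at (s - c) within (\<lambda>s. s - c) ` S')"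
      using a(1) Suc.prems s by (auto intro: has_vector_derivative_within_subset)
    ultimately show "((\<lambda>s. g (s - c)) has_vector_derivative g' (s - c)) (at s within S')"
      using vector_diff_chain_within[of "\<lambda>s. s - c" 1 s S' g] by (simp add: o_def)
  qed (use Suc a in auto)
qed




lemma Ck_map_comp:
  fixes F :: "'a::euclidean_space \<Rightarrow> 'b::real_normed_vector"
  shows "Ck_map k F \<Longrightarrow> Ck_on k S \<phi> \<Longrightarrow> Ck_on k S (\<lambda>s. F (\<phi> s))"
proof (induction k arbitrary: F \<phi>)
  case 0 then show ?case
    by (auto simp: Ck_on_0 intro: continuous_on_compose2[of UNIV F])
next
  case (Suc k)
  obtain DF where hD: "\<forall>u. (F has_derivative DF u) (at u)" "\<forall>v. Ck_map k (\<lambda>u. DF u v)"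
    using Suc.prems(1) by auto
  obtain \<phi>' where a: "\<forall>s\<in>S. (\<phi> has_vector_derivative \<phi>' s) (at s within S)" "Ck_on k S \<phi>'"
    using Suc.prems(2) Ck_on_Suc by blast
  have lin: "linear (DF u)" for u using hD(1) has_derivative_linear by blast
  show ?case unfolding Ck_on_Suc
  proof (rule exI[of _ "\<lambda>s. DF (\<phi> s) (\<phi>' s)"], intro conjI ballI)
    fix s assume s: "s \<in> S"
    have "((\<lambda>x. F (\<phi> x)) has_derivative (\<lambda>t. DF (\<phi> s) (t *\<^sub>R \<phi>' s))) (at s within S)"
      using a(1) s hD(1) unfolding has_vector_derivative_def
      by (intro has_derivative_in_compose[of \<phi> _ s S F]) (auto intro: has_derivative_at_withinI)
    then show "((\<lambda>s. F (\<phi> s)) has_vector_derivative DF (\<phi> s) (\<phi>' s)) (at s within S)"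
      unfolding has_vector_derivative_def using linear_scale[OF lin] by simp
  next
    have eq: "DF (\<phi> s) (\<phi>' s) = (\<Sum>b\<in>Basis. (\<phi>' s \<bullet> b) *\<^sub>R DF (\<phi> s) b)" for s
    proof -
      have "DF (\<phi> s) (\<phi>' s) = DF (\<phi> s) (\<Sum>b\<in>Basis. (\<phi>' s \<bullet> b) *\<^sub>R b)"
        by (simp add: euclidean_representation)
      also have "\<dots> = (\<Sum>b\<in>Basis. (\<phi>' s \<bullet> b) *\<^sub>R DF (\<phi> s) b)"
        by (simp only: linear_sum[OF lin] linear_scale[OF lin])
      finally show ?thesis .
    qed
    have m: "Ck_on k S \<phi>" using Suc.prems(2) Ck_on_mono by blast
    have "Ck_on k S (\<lambda>s. \<Sum>b\<in>Basis. (\<phi>' s \<bullet> b) *\<^sub>R DF (\<phi> s) b)"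
    proof (rule Ck_on_sum[OF finite_Basis])
      fix b :: 'a assume "b \<in> Basis"
      have 1: "Ck_on k S (\<lambda>s. \<phi>' s \<bullet> b)" by (rule Ck_on_linear[OF bounded_linear_inner_left a(2)])
      have 2: "Ck_on k S (\<lambda>s. DF (\<phi> s) b)" by (rule Suc.IH[OF spec[OF hD(2)] m])
      show "Ck_on k S (\<lambda>s. (\<phi>' s \<bullet> b) *\<^sub>R DF (\<phi> s) b)" by (rule Ck_on_scaleR[OF 1 2])
    qed
    then show "Ck_on k S (\<lambda>s. DF (\<phi> s) (\<phi>' s))" by (rule Ck_on_cong) (rule eq[symmetric])
  qed
qed




lemma right_deriv_zero_bound:
  fixes y :: "real \<Rightarrow> 'a::real_normed_vector"
  assumes ab: "a \<le> b" and cont: "continuous_on {a..b} y"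
    and d: "\<And>t. t \<in> {a..<b} \<Longrightarrow> (y has_vector_derivative 0) (at t within {t<..b})"
    and e: "e > 0"
  shows "norm (y b - y a) \<le> e * (b - a)"
proof -
  define S where "S = {t\<in>{a..b}. \<forall>u\<in>{a..t}. norm (y u - y a) \<le> e * (u - a)}"
  have aS: "a \<in> S" using ab by (auto simp: S_def)
  have bdd: "bdd_above S" unfolding S_def by (rule bdd_aboveI[of _ b]) auto
  define c where "c = Sup S"
  have ac: "a \<le> c" unfolding c_def using aS bdd by (rule cSup_upper)
  have cb: "c \<le> b" unfolding c_def using aS by (intro cSup_least) (auto simp: S_def)
  have below: "norm (y u - y a) \<le> e * (u - a)" if "u \<in> {a..<c}" for u
  proof -
    from that have "u < Sup S" by (simp add: c_def)
    then obtain t where t: "t \<in> S" "u < t" using less_cSup_iff[OF _ bdd] aS by blast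
    then show ?thesis using that by (auto simp: S_def)
  qed
  have cS: "c \<in> S"
  proof (cases "a = c")
    case True then show ?thesis using aS by simp
  next
    case False
    then have acl: "a < c" using ac by simp
    have cy: "continuous_on {a..c} y" by (rule continuous_on_subset[OF cont]) (use cb in auto)
    have cl: "closed {u \<in> {a..c}. norm (y u - y a) \<le> e * (u - a)}"
    proof -
      have c1: "continuous_on {a..c} (\<lambda>u. norm (y u - y a))"
        by (intro continuous_on_norm continuous_on_diff cy continuous_on_const)
      have c2: "continuous_on {a..c} (\<lambda>u. e * (u - a))"
        by (intro continuous_intros)
      show ?thesis using continuous_on_closed_Collect_le[OF c1 c2 closed_atLeastAtMost] .
    qed
    have "closure {a..<c} \<subseteq> {u \<in> {a..c}. norm (y u - y a) \<le> e * (u - a)}"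
      by (rule closure_minimal[OF _ cl]) (use below in auto)
    then show ?thesis using acl cb unfolding S_def by auto
  qed
  have "c = b"
  proof (rule ccontr)
    assume "c \<noteq> b" then have cb': "c < b" using cb by simp
    have "(y has_derivative (\<lambda>h. h *\<^sub>R 0)) (at c within {c<..b})"
      using d[of c] ac cb' unfolding has_vector_derivative_def by auto
    then have "\<exists>d>0. \<forall>u\<in>{c<..b}. norm (u - c) < d \<longrightarrow> norm (y u - y c - (u - c) *\<^sub>R 0) \<le> e * norm (u - c)"
      unfolding has_derivative_within_alt using e by blast
    then obtain \<delta> where \<delta>: "\<delta> > 0" "\<And>u. u\<in>{c<..b} \<Longrightarrow> norm (u - c) < \<delta> \<Longrightarrow> norm (y u - y c) \<le> e * norm (u - c)"
      by auto
    define w where "w = min b (c + \<delta>/2)"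
    have wc: "c < w" "w \<le> b" using cb' \<delta> by (auto simp: w_def)
    have "w \<in> S" unfolding S_def
    proof (intro CollectI conjI ballI)
      show "w \<in> {a..b}" using wc ac by auto
      fix u assume u: "u \<in> {a..w}"
      show "norm (y u - y a) \<le> e * (u - a)"
      proof (cases "u \<le> c")
        case True then show ?thesis using cS u by (auto simp: S_def)
      next
        case False
        have "norm (u - c) < \<delta>" using False u \<delta> by (auto simp: w_def)
        then have 1: "norm (y u - y c) \<le> e * (u - c)" using \<delta>(2)[of u] False u wc by auto
        have 2: "norm (y c - y a) \<le> e * (c - a)" using cS by (auto simp: S_def)
        have "norm (y u - y a) \<le> norm (y u - y c) + norm (y c - y a)" by (rule norm_diff_triangle_le) auto
        also have "\<dots> \<le> e * (u - a)" using 1 2 by (simp add: algebra_simps)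
        finally show ?thesis .
      qed
    qed
    then have "w \<le> c" unfolding c_def using bdd by (rule cSup_upper)
    then show False using wc by simp
  qed
  then show ?thesis using cS ab by (auto simp: S_def)
qed

lemma right_deriv_zero_const:
  fixes y :: "real \<Rightarrow> 'a::real_normed_vector"
  assumes cont: "continuous_on {a..b} y"
    and d: "\<And>t. t \<in> {a..<b} \<Longrightarrow> (y has_vector_derivative 0) (at t within {t<..b})"
    and t: "t \<in> {a..b}"
  shows "y t = y a"
proof -
  have "norm (y t - y a) \<le> e * (t - a)" if "e > 0" for e
  proof (rule right_deriv_zero_bound[of a t y e])
    show "continuous_on {a..t} y" using t by (intro continuous_on_subset[OF cont]) auto
    fix s assume "s \<in> {a..<t}"
    then show "(y has_vector_derivative 0) (at s within {s<..t})"
      using t by (intro has_vector_derivative_within_subset[OF d[of s]]) auto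
  qed (use t that in auto)
  then have "norm (y t - y a) \<le> 0"
  proof -
    assume h: "\<And>e. e > 0 \<Longrightarrow> norm (y t - y a) \<le> e * (t - a)"
    show ?thesis
    proof (rule field_le_epsilon)
      fix e :: real assume "e > 0"
      have p: "e / (t - a + 1) > 0" using \<open>e > 0\<close> t by auto
      have "norm (y t - y a) \<le> e / (t - a + 1) * (t - a)" using h[OF p] .
      also have "\<dots> = e * ((t - a) / (t - a + 1))" by simp
      also have "\<dots> \<le> e * 1"
      proof (rule mult_left_mono)
        show "(t - a) / (t - a + 1) \<le> 1" using t by (simp add: divide_le_eq_1)
      qed (use \<open>e > 0\<close> in simp)
      finally show "norm (y t - y a) \<le> 0 + e" by simp
    qed
  qed
  then show ?thesis by simp
qed




lemma right_deriv_imp_deriv: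
  fixes x g :: "real \<Rightarrow> 'a::banach"
  assumes cx: "continuous_on {a..b} x" and cg: "continuous_on {a..b} g"
    and d: "\<And>t. t \<in> {a..<b} \<Longrightarrow> (x has_vector_derivative g t) (at_right t)"
    and s: "s \<in> {a..b}"
  shows "(x has_vector_derivative g s) (at s within {a..b})"
proof -
  define I where "I = (\<lambda>u. integral {a..u} g)"
  have dI: "(I has_vector_derivative g u) (at u within {a..b})" if "u \<in> {a..b}" for u
    unfolding I_def by (rule integral_has_vector_derivative[OF cg that])
  have cI: "continuous_on {a..b} I"
    unfolding continuous_on_eq_continuous_within using dI has_vector_derivative_continuous by blast
  define y where "y = (\<lambda>u. x u - I u)"
  have cy: "continuous_on {a..b} y" unfolding y_def by (intro continuous_on_diff cx cI)
  have dy: "(y has_vector_derivative 0) (at t within {t<..b})" if t: "t \<in> {a..<b}" for t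
  proof -
    have 1: "(x has_vector_derivative g t) (at t within {t<..b})"
      by (rule has_vector_derivative_within_subset[OF d[OF t]]) auto
    have 2: "(I has_vector_derivative g t) (at t within {t<..b})"
      by (rule has_vector_derivative_within_subset[OF dI]) (use t in auto)
    show ?thesis unfolding y_def using has_vector_derivative_diff[OF 1 2] by simp
  qed
  have eq: "x u = x a + I u" if "u \<in> {a..b}" for u
  proof -
    have "y u = y a" by (rule right_deriv_zero_const[OF cy dy that])
    moreover have "I a = 0" by (simp add: I_def)
    ultimately show ?thesis by (simp add: y_def algebra_simps)
  qed
  have "((\<lambda>u. x a + I u) has_vector_derivative g s) (at s within {a..b})"
    using has_vector_derivative_add[OF has_vector_derivative_const dI[OF s]] by simp
  then show ?thesis using has_vector_derivative_transform[where f="\<lambda>u. x a + I u" and g=x, OF s] eq by blast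
qed




lemma derivs_on_subset: "derivs_on k S g D \<Longrightarrow> S' \<subseteq> S \<Longrightarrow> derivs_on k S' g D"
  unfolding derivs_on_def
  by (metis (no_types, lifting) continuous_on_subset has_vector_derivative_within_subset subsetD)

lemma derivs_on_mono: assumes "derivs_on k S g D" "j \<le> k" shows "derivs_on j S g D"
proof -
  have "continuous_on S (D j)"
  proof (cases "j = k")
    case True then show ?thesis using assms unfolding derivs_on_def by auto
  next
    case False
    then have "\<forall>s\<in>S. (D j has_vector_derivative D (Suc j) s) (at s within S)"
      using assms unfolding derivs_on_def by auto
    then show ?thesis unfolding continuous_on_eq_continuous_within
      using has_vector_derivative_continuous by blast
  qed
  then show ?thesis using assms unfolding derivs_on_def by auto
qed

lemma derivs_on_shift:
  assumes "derivs_on k S g D" "\<And>s. s\<in>I \<Longrightarrow> t + s \<in> S"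
  shows "derivs_on k I (\<lambda>s. g (t + s)) (\<lambda>j s. D j (t + s))"
  unfolding derivs_on_def
proof (intro conjI ballI allI impI)
  fix s assume "s \<in> I" then show "D 0 (t + s) = g (t + s)" using assms unfolding derivs_on_def by auto
next
  fix j s assume j: "j < k" and s: "s \<in> I"
  have "((\<lambda>s. t + s) has_vector_derivative 1) (at s within I)"
    by (auto intro!: derivative_eq_intros)
  moreover have "(D j has_vector_derivative D (Suc j) (t + s)) (at (t + s) within (\<lambda>s. t + s) ` I)"
  proof (rule has_vector_derivative_within_subset)
    show "(D j has_vector_derivative D (Suc j) (t + s)) (at (t + s) within S)"
      using assms j s unfolding derivs_on_def by auto
  qed (use assms(2) in auto)
  ultimately show "((\<lambda>s. D j (t + s)) has_vector_derivative D (Suc j) (t + s)) (at s within I)"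
    using vector_diff_chain_within[of "\<lambda>s. t + s" 1 s I "D j"] by (simp add: o_def)
next
  have "continuous_on S (D k)" using assms unfolding derivs_on_def by auto
  then show "continuous_on I (\<lambda>s. D k (t + s))"
    by (rule continuous_on_compose2) (use assms(2) in \<open>auto intro!: continuous_intros\<close>)
qed

lemma tder_eq:
  assumes d: "derivs_on k I g D" and lim: "\<And>u. u \<in> I \<Longrightarrow> u islimpt I" and u: "u \<in> I"
  shows "tder k I g u = D k u /\<^sub>R fact k"
proof -
  define D' where "D' = (SOME D. derivs_on k I g D)"
  have d': "derivs_on k I g D'" unfolding D'_def using d by (rule someI[of "derivs_on k I g"])
  have "\<forall>u\<in>I. D' j u = D j u" if "j \<le> k" for j
    using that
  proof (induction j)
    case 0 then show ?case using d d' unfolding derivs_on_def by auto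
  next
    case (Suc j)
    show ?case
    proof
      fix u assume u: "u \<in> I"
      have 1: "(D j has_vector_derivative D (Suc j) u) (at u within I)"
        using d Suc.prems u unfolding derivs_on_def by auto
      have "(D' j has_vector_derivative D' (Suc j) u) (at u within I)"
        using d' Suc.prems u unfolding derivs_on_def by auto
      then have 2: "(D j has_vector_derivative D' (Suc j) u) (at u within I)"
        using has_vector_derivative_transform[of u I "D j" "D' j"] Suc u by auto
      have "at u within I \<noteq> bot" using lim[OF u] by (simp add: trivial_limit_within)
      then show "D' (Suc j) u = D (Suc j) u" using vector_derivative_unique_within 1 2 by metis
    qed
  qed
  then show ?thesis unfolding tder_def D'_def[symmetric] using u by auto
qed

lemma pick3:
  fixes h u e1 e2 :: real and M0 :: int and N :: nat
  assumes h: "h > 0" and u: "u \<in> {of_int M0 * h + e1 .. (of_int M0 + real N) * h + e2}" and N: "N \<ge> 1"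
  shows "u \<in> {of_int M0 * h + e1 .. (of_int M0 + 1) * h} \<or>
         (\<exists>j\<in>{1..<N}. u \<in> {(of_int M0 + real j) * h .. (of_int M0 + real j + 1) * h}) \<or>
         u \<in> {(of_int M0 + real N) * h .. (of_int M0 + real N) * h + e2}"
proof (cases "u \<le> (of_int M0 + 1) * h")
  case True then show ?thesis using u by auto
next
  case F1: False
  show ?thesis
  proof (cases "u \<ge> (of_int M0 + real N) * h")
    case True then show ?thesis using u by auto
  next
    case F2: False
    define q where "q = \<lfloor>u / h\<rfloor>"
    have q1: "of_int q \<le> u / h" "u / h < of_int q + 1" unfolding q_def by linarith+
    have "u / h > of_int M0 + 1" using F1 h by (simp add: field_simps)
    then have qa: "q \<ge> M0 + 1" unfolding q_def by linarith
    have "u / h < of_int M0 + real N" using F2 h by (simp add: field_simps)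
    then have qb: "q < M0 + int N" unfolding q_def by linarith
    define j where "j = nat (q - M0)"
    have jq: "real j = of_int q - of_int M0" using qa unfolding j_def by simp
    have "j \<in> {1..<N}" using qa qb unfolding j_def by auto
    moreover have "(of_int M0 + real j) * h \<le> u" using q1(1) h jq by (simp add: field_simps)
    moreover have "u \<le> (of_int M0 + real j + 1) * h" using q1(2) h jq by (simp add: field_simps)
    ultimately show ?thesis by auto
  qed
qed




lemma dde_regular:
  fixes f :: "'a::euclidean_space \<Rightarrow> 'a \<Rightarrow> 'a" and x0 x :: "real \<Rightarrow> 'a"
  assumes hf: "smooth_map (\<lambda>(u, v). f u v)" and h\<tau>: "\<tau> > 0" and T0: "0 \<le> T"
    and hx0c: "continuous_on {-\<tau>..0} x0" and hsol: "is_solution f \<tau> T x0 x"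
  shows "\<exists>X. derivs_on (Suc k) {real k * \<tau>..T} x X \<and>
             (\<forall>s\<in>{real k * \<tau>..T}. X 1 s = f (x s) (x (s - \<tau>)))"
proof (induction k)
  have Fk: "Ck_map j (\<lambda>(u, v). f u v)" for j using hf unfolding smooth_map_def by auto
  have sol: "\<forall>s\<in>{-\<tau>..0}. x s = x0 s" "continuous_on {0..T} x"
    "\<forall>t\<in>{0..<T}. (x has_vector_derivative f (x t) (x (t - \<tau>))) (at_right t)"
    using hsol unfolding is_solution_def by auto
  have c1: "continuous_on {-\<tau>..0} x" by (rule continuous_on_eq[OF hx0c]) (use sol(1) in auto)
  have cx: "continuous_on {-\<tau>..T} x"
  proof -
    have "continuous_on ({-\<tau>..0} \<union> {0..T}) x" by (rule continuous_on_closed_Un[OF _ _ c1 sol(2)]) auto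
    moreover have "{-\<tau>..0} \<union> {0..T} = {-\<tau>..T}" using T0 h\<tau> by auto
    ultimately show ?thesis by simp
  qed
  case 0
  define g where "g = (\<lambda>s. f (x s) (x (s - \<tau>)))"
  have "Ck_on 0 {0..T} (\<lambda>s. (x s, x (s - \<tau>)))"
  proof (rule Ck_on_Pair)
    show "Ck_on 0 {0..T} x" unfolding Ck_on_0 by (rule continuous_on_subset[OF cx]) (use h\<tau> in auto)
    show "Ck_on 0 {0..T} (\<lambda>s. x (s - \<tau>))"
      by (rule Ck_on_shift[of 0 "{-\<tau>..T}"]) (use cx h\<tau> in \<open>auto simp: Ck_on_0\<close>)
  qed
  then have "Ck_on 0 {0..T} (\<lambda>s. (\<lambda>(u, v). f u v) (x s, x (s - \<tau>)))"
    by (rule Ck_map_comp[OF Fk])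
  then have cg: "continuous_on {0..T} g" unfolding g_def by (simp add: Ck_on_0)
  have dx: "(x has_vector_derivative g s) (at s within {0..T})" if "s \<in> {0..T}" for s
    by (rule right_deriv_imp_deriv[OF sol(2) cg _ that]) (use sol(3) in \<open>auto simp: g_def\<close>)
  have "derivs_on 0 {0..T} g (\<lambda>_. g)" using cg unfolding derivs_on_def by auto
  from derivs_on_SucI[OF dx this] have "derivs_on (Suc 0) {0..T} x (\<lambda>j. case j of 0 \<Rightarrow> x | Suc j \<Rightarrow> g)" .
  then show ?case by (intro exI[of _ "\<lambda>j. case j of 0 \<Rightarrow> x | Suc j \<Rightarrow> g"]) (simp add: g_def)
next
  case (Suc k)
  have Fk: "Ck_map j (\<lambda>(u, v). f u v)" for j using hf unfolding smooth_map_def by auto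
  obtain X where X: "derivs_on (Suc k) {real k * \<tau>..T} x X"
    "\<forall>s\<in>{real k * \<tau>..T}. X 1 s = f (x s) (x (s - \<tau>))" using Suc.IH by blast
  define S where "S = {real (Suc k) * \<tau>..T}"
  have SS: "S \<subseteq> {real k * \<tau>..T}" unfolding S_def using h\<tau> by auto
  have Cx: "Ck_on (Suc k) {real k * \<tau>..T} x" using X(1) unfolding Ck_on_def by blast
  have "Ck_on (Suc k) S (\<lambda>s. (x s, x (s - \<tau>)))"
  proof (rule Ck_on_Pair)
    show "Ck_on (Suc k) S x" using Ck_on_subset[OF Cx SS] .
    show "Ck_on (Suc k) S (\<lambda>s. x (s - \<tau>))"
      by (rule Ck_on_shift[OF Cx]) (use h\<tau> in \<open>auto simp: S_def algebra_simps\<close>)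
  qed
  then have "Ck_on (Suc k) S (\<lambda>s. (\<lambda>(u, v). f u v) (x s, x (s - \<tau>)))"
    by (rule Ck_map_comp[OF Fk])
  then obtain E where E: "derivs_on (Suc k) S (\<lambda>s. f (x s) (x (s - \<tau>))) E"
    unfolding Ck_on_def by auto
  have dx: "(x has_vector_derivative f (x s) (x (s - \<tau>))) (at s within S)" if "s \<in> S" for s
  proof -
    have "(x has_vector_derivative X 1 s) (at s within {real k * \<tau>..T})"
      using derivs_on_SucD[OF X(1)] that SS by auto
    moreover have "X 1 s = f (x s) (x (s - \<tau>))" using X(2) that SS by auto
    ultimately show ?thesis using has_vector_derivative_within_subset[OF _ SS] by metis
  qed
  have "derivs_on (Suc (Suc k)) S x (\<lambda>j. case j of 0 \<Rightarrow> x | Suc j \<Rightarrow> E j)"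
    by (rule derivs_on_SucI[OF dx E])
  moreover have "\<forall>s\<in>S. E 0 s = f (x s) (x (s - \<tau>))" using E unfolding derivs_on_def by auto
  ultimately show ?case unfolding S_def by (intro exI[of _ "\<lambda>j. case j of 0 \<Rightarrow> x | Suc j \<Rightarrow> E j"]) simp
qed




theorem mainTheorem3:
  fixes f :: "real^'d \<Rightarrow> real^'d \<Rightarrow> real^'d"
    and p m mb n :: nat and \<tau> T \<epsilon>1 \<epsilon>2 :: real
    and \<eta> :: "nat \<Rightarrow> nat"
    and x0 x :: "real \<Rightarrow> real^'d"
    and L R Rt :: "nat \<Rightarrow> nat \<Rightarrow> (real^'d) set"
    and C :: "nat \<Rightarrow> nat \<Rightarrow> nat \<Rightarrow> (real^'d) set"
  defines "h \<equiv> \<tau> / real p"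
  assumes hp: "p \<ge> 1" and h\<tau>: "\<tau> > 0"
    and hf: "smooth_map (\<lambda>(u, v). f u v)"
    and hx0: "Cp p \<tau> \<eta> x0" and hx0c: "continuous_on {-\<tau>..0} x0"
    and hsol: "is_solution f \<tau> T x0 x"
    and hmb: "mb \<ge> 1"
    and he1: "0 < \<epsilon>1" "\<epsilon>1 < h" and he2: "0 < \<epsilon>2" "\<epsilon>2 < h"
    and hT: "(real (m + mb + 1)) * h + \<epsilon>2 \<le> T"
    and hmp: "1 \<le> m div p" and hn: "n = m div p - 1"
    and boxes: "\<And>k i. k \<le> n + 1 \<Longrightarrow> i \<le> p \<Longrightarrow>
                  is_box (L k i) \<and> is_box (R k i) \<and> is_box (Rt k i) \<and>
                  (\<forall>j\<in>{1..mb}. is_box (C k i j))"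
    and hL: "\<And>k i s. k \<le> n + 1 \<Longrightarrow> i \<le> p \<Longrightarrow>
               s \<in> {(real m - real i) * h + \<epsilon>1 .. (real m - real i + 1) * h} \<Longrightarrow>
               tder k {(real m - real i) * h + \<epsilon>1 .. (real m - real i + 1) * h} x s \<in> L k i"
    and hC: "\<And>k i j s. k \<le> n + 1 \<Longrightarrow> i \<le> p \<Longrightarrow> j \<in> {1..mb} \<Longrightarrow>
               s \<in> {(real m - real i + real j) * h .. (real m - real i + real j + 1) * h} \<Longrightarrow>
               tder k {(real m - real i + real j) * h .. (real m - real i + real j + 1) * h} x s \<in> C k i j"
    and hR: "\<And>k i s. k \<le> n + 1 \<Longrightarrow> i \<le> p \<Longrightarrow>
               s \<in> {(real m - real i + real mb) * h .. (real m - real i + real mb) * h + \<epsilon>2} \<Longrightarrow>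
               tder k {(real m - real i + real mb) * h .. (real m - real i + real mb) * h + \<epsilon>2} x s \<in> R k i"
    and hRt: "\<And>k i s. k \<le> n + 1 \<Longrightarrow> i \<le> p \<Longrightarrow>
               s \<in> {(real m - real i + real mb + 1) * h .. (real m - real i + real mb + 1) * h + \<epsilon>2} \<Longrightarrow>
               tder k {(real m - real i + real mb + 1) * h .. (real m - real i + real mb + 1) * h + \<epsilon>2} x s \<in> Rt k i"
  shows "\<forall>t \<in> {real m * h + \<epsilon>1 .. real (m + mb) * h + \<epsilon>2}.
           (Cp p \<tau> (\<lambda>_. n) (seg x t) \<and> Ck_on (n + 1) {-\<tau>..0} (seg x t)) \<and>
           z_fun (seg x t) \<in> box_hull (L 0 0 \<union> (\<Union>j\<in>{1..<mb}. C 0 0 j) \<union> R 0 0) \<and>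
           (\<forall>i\<in>{1..p}. \<forall>k\<le>n.
              j_fun p \<tau> i k (seg x t) \<in> box_hull (L k i \<union> (\<Union>j\<in>{1..<mb}. C k i j) \<union> R k i)) \<and>
           (\<forall>i\<in>{1..p}. \<forall>s\<in>{0..<h}.
              xi_fun p \<tau> n i (seg x t) s \<in>
                box_hull (L (n+1) i \<union> (\<Union>j\<in>{1..mb}. C (n+1) i j) \<union> Rt (n+1) i))"
proof -
  have hpos: "h > 0" using hp h\<tau> by (simp add: h_def)
  have \<tau>h: "\<tau> = real p * h" using hp by (simp add: h_def)
  have mono: "\<And>a b. a \<le> b \<Longrightarrow> a * h \<le> b * h" using hpos by (simp add: mult_right_mono)
  have np: "(n + 1) * p \<le> m"
  proof -
    have "m div p * p \<le> m" by (rule div_times_less_eq_dividend)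
    moreover have "n + 1 = m div p" using hmp hn by simp
    ultimately show ?thesis by simp
  qed
  have npr: "real n * real p + real p \<le> real m"
  proof -
    have "real ((n + 1) * p) \<le> real m" using np by (simp only: of_nat_le_iff)
    then show ?thesis by (simp add: algebra_simps)
  qed
  have low: "real n * \<tau> \<le> (real m - real i) * h" if "i \<le> p" for i
  proof -
    have "real n * \<tau> = (real n * real p) * h" using \<tau>h by simp
    also have "\<dots> \<le> (real m - real i) * h" using that npr by (intro mono) simp
    finally show ?thesis .
  qed
  have Tb: "(real m + real mb + 1) * h + \<epsilon>2 \<le> T" using hT by (simp add: add.commute add.left_commute)
  have T0: "0 \<le> T"
  proof -
    have "0 \<le> (real m + real mb + 1) * h" using hpos by simp
    then show ?thesis using Tb he2 by linarith
  qed
  have Fsm: "smooth_map (\<lambda>(u, v). f u v)" by (rule hf)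
  obtain X where X: "derivs_on (Suc n) {real n * \<tau>..T} x X"
    using dde_regular[OF hf h\<tau> T0 hx0c hsol, of n] by blast
  define S where "S = {real n * \<tau>..T}"
  have X0a: "\<forall>s\<in>S. X 0 s = x s" using X unfolding derivs_on_def S_def by blast
  have X0: "X 0 s = x s" if "s \<in> S" for s using X0a that by blast
  have tderX: "tder k {\<alpha>..\<beta>} x u = X k u /\<^sub>R fact k"
    if "\<alpha> < \<beta>" "real n * \<tau> \<le> \<alpha>" "\<beta> \<le> T" "k \<le> n + 1" "u \<in> {\<alpha>..\<beta>}" for k \<alpha> \<beta> u
  proof (rule tder_eq[OF _ _ that(5)])
    have sub: "{\<alpha>..\<beta>} \<subseteq> {real n * \<tau>..T}" using that(2,3) by auto
    have "derivs_on (Suc n) {\<alpha>..\<beta>} x X" by (rule derivs_on_subset[OF X sub])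
    then show "derivs_on k {\<alpha>..\<beta>} x X" by (rule derivs_on_mono) (use that(4) in simp)
    show "u' islimpt {\<alpha>..\<beta>}" if "u' \<in> {\<alpha>..\<beta>}" for u' using that \<open>\<alpha> < \<beta>\<close> islimpt_Icc by blast
  qed
  have claimA: "X k u /\<^sub>R fact k \<in> L k i \<union> (\<Union>j\<in>{1..<mb}. C k i j) \<union> R k i"
    if i: "i \<le> p" and k: "k \<le> n" and u: "u \<in> {(real m - real i) * h + \<epsilon>1 .. (real m - real i + real mb) * h + \<epsilon>2}"
    for i k u
  proof -
    have M: "(of_int (int m - int i) :: real) = real m - real i" by simp
    have u': "u \<in> {of_int (int m - int i) * h + \<epsilon>1 .. (of_int (int m - int i) + real mb) * h + \<epsilon>2}"
      unfolding M using u .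
    have P: "u \<in> {of_int (int m - int i) * h + \<epsilon>1 .. (of_int (int m - int i) + 1) * h} \<or>
         (\<exists>j\<in>{1..<mb}. u \<in> {(of_int (int m - int i) + real j) * h .. (of_int (int m - int i) + real j + 1) * h}) \<or>
         u \<in> {(of_int (int m - int i) + real mb) * h .. (of_int (int m - int i) + real mb) * h + \<epsilon>2}"
      by (rule pick3[OF hpos u' hmb])
    have cases: "u \<in> {(real m - real i) * h + \<epsilon>1 .. (real m - real i + 1) * h} \<or>
         (\<exists>j\<in>{1..<mb}. u \<in> {(real m - real i + real j) * h .. (real m - real i + real j + 1) * h}) \<or>
         u \<in> {(real m - real i + real mb) * h .. (real m - real i + real mb) * h + \<epsilon>2}"
      using P unfolding M .
    have lo: "real n * \<tau> \<le> (real m - real i) * h" using low[OF i] .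
    have kk: "k \<le> n + 1" using k by simp
    from cases show ?thesis
    proof (elim disjE bexE)
      assume uL: "u \<in> {(real m - real i) * h + \<epsilon>1 .. (real m - real i + 1) * h}"
      have a1: "(real m - real i + 1) * h \<le> (real m + real mb + 1) * h" by (intro mono) simp
      have "tder k {(real m - real i) * h + \<epsilon>1 .. (real m - real i + 1) * h} x u = X k u /\<^sub>R fact k"
        proof (rule tderX[OF _ _ _ kk uL])
        show "(real m - real i) * h + \<epsilon>1 < (real m - real i + 1) * h" using he1 by (simp add: algebra_simps)
        show "real n * \<tau> \<le> (real m - real i) * h + \<epsilon>1" using lo he1 by linarith
        show "(real m - real i + 1) * h \<le> T" using a1 Tb he2 by linarith
      qed
      then show ?thesis using hL[OF kk i uL] by auto
    next
      fix j assume j: "j \<in> {1..<mb}" and uC: "u \<in> {(real m - real i + real j) * h .. (real m - real i + real j + 1) * h}"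
      have a1: "(real m - real i + real j + 1) * h \<le> (real m + real mb + 1) * h" using j by (intro mono) simp
      have a2: "(real m - real i) * h \<le> (real m - real i + real j) * h" by (intro mono) simp
      have a3: "(real m - real i + real j) * h < (real m - real i + real j + 1) * h" using hpos by (simp add: algebra_simps)
      have "tder k {(real m - real i + real j) * h .. (real m - real i + real j + 1) * h} x u = X k u /\<^sub>R fact k"
        proof (rule tderX[OF a3 _ _ kk uC])
        show "real n * \<tau> \<le> (real m - real i + real j) * h" using lo a2 by linarith
        show "(real m - real i + real j + 1) * h \<le> T" using a1 Tb he2 by linarith
      qed
      then show ?thesis using hC[OF kk i _ uC] j by auto
    next
      assume uR: "u \<in> {(real m - real i + real mb) * h .. (real m - real i + real mb) * h + \<epsilon>2}"
      have a1: "(real m - real i + real mb) * h \<le> (real m + real mb + 1) * h" by (intro mono) simp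
      have a2: "(real m - real i) * h \<le> (real m - real i + real mb) * h" by (intro mono) simp
      have "tder k {(real m - real i + real mb) * h .. (real m - real i + real mb) * h + \<epsilon>2} x u = X k u /\<^sub>R fact k"
        proof (rule tderX[OF _ _ _ kk uR])
        show "real n * \<tau> \<le> (real m - real i + real mb) * h" using lo a2 by linarith
        show "(real m - real i + real mb) * h < (real m - real i + real mb) * h + \<epsilon>2" using he2 by linarith
        show "(real m - real i + real mb) * h + \<epsilon>2 \<le> T" using a1 Tb by linarith
      qed
      then show ?thesis using hR[OF kk i uR] by auto
    qed
  qed
  have claimB: "X (n + 1) u /\<^sub>R fact (n + 1) \<in> L (n+1) i \<union> (\<Union>j\<in>{1..mb}. C (n+1) i j) \<union> Rt (n+1) i"
    if i: "i \<le> p" and u: "u \<in> {(real m - real i) * h + \<epsilon>1 .. (real m - real i + real mb + 1) * h + \<epsilon>2}"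
    for i u
  proof -
    have M: "(of_int (int m - int i) :: real) = real m - real i" by simp
    have e: "real m - real i + real (Suc mb) = real m - real i + real mb + 1" by simp
    have u': "u \<in> {of_int (int m - int i) * h + \<epsilon>1 .. (of_int (int m - int i) + real (Suc mb)) * h + \<epsilon>2}"
      unfolding M e using u .
    have P: "u \<in> {of_int (int m - int i) * h + \<epsilon>1 .. (of_int (int m - int i) + 1) * h} \<or>
         (\<exists>j\<in>{1..<Suc mb}. u \<in> {(of_int (int m - int i) + real j) * h .. (of_int (int m - int i) + real j + 1) * h}) \<or>
         u \<in> {(of_int (int m - int i) + real (Suc mb)) * h .. (of_int (int m - int i) + real (Suc mb)) * h + \<epsilon>2}"
      by (rule pick3[OF hpos u']) simp
    have cases: "u \<in> {(real m - real i) * h + \<epsilon>1 .. (real m - real i + 1) * h} \<or>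
         (\<exists>j\<in>{1..<Suc mb}. u \<in> {(real m - real i + real j) * h .. (real m - real i + real j + 1) * h}) \<or>
         u \<in> {(real m - real i + real mb + 1) * h .. (real m - real i + real mb + 1) * h + \<epsilon>2}"
      using P unfolding M e .
    have lo: "real n * \<tau> \<le> (real m - real i) * h" using low[OF i] .
    have kk: "n + 1 \<le> n + 1" by simp
    from cases show ?thesis
    proof (elim disjE bexE)
      assume uL: "u \<in> {(real m - real i) * h + \<epsilon>1 .. (real m - real i + 1) * h}"
      have a1: "(real m - real i + 1) * h \<le> (real m + real mb + 1) * h" by (intro mono) simp
      have "tder (n+1) {(real m - real i) * h + \<epsilon>1 .. (real m - real i + 1) * h} x u = X (n+1) u /\<^sub>R fact (n+1)"
        proof (rule tderX[OF _ _ _ kk uL])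
        show "(real m - real i) * h + \<epsilon>1 < (real m - real i + 1) * h" using he1 by (simp add: algebra_simps)
        show "real n * \<tau> \<le> (real m - real i) * h + \<epsilon>1" using lo he1 by linarith
        show "(real m - real i + 1) * h \<le> T" using a1 Tb he2 by linarith
      qed
      then show ?thesis using hL[OF kk i uL] by auto
    next
      fix j assume j: "j \<in> {1..<Suc mb}" and uC: "u \<in> {(real m - real i + real j) * h .. (real m - real i + real j + 1) * h}"
      have a1: "(real m - real i + real j + 1) * h \<le> (real m + real mb + 1) * h" using j by (intro mono) simp
      have a2: "(real m - real i) * h \<le> (real m - real i + real j) * h" by (intro mono) simp
      have a3: "(real m - real i + real j) * h < (real m - real i + real j + 1) * h" using hpos by (simp add: algebra_simps)
      have "tder (n+1) {(real m - real i + real j) * h .. (real m - real i + real j + 1) * h} x u = X (n+1) u /\<^sub>R fact (n+1)"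
        proof (rule tderX[OF a3 _ _ kk uC])
        show "real n * \<tau> \<le> (real m - real i + real j) * h" using lo a2 by linarith
        show "(real m - real i + real j + 1) * h \<le> T" using a1 Tb he2 by linarith
      qed
      then show ?thesis using hC[OF kk i _ uC] j by auto
    next
      assume uR: "u \<in> {(real m - real i + real mb + 1) * h .. (real m - real i + real mb + 1) * h + \<epsilon>2}"
      have a1: "(real m - real i + real mb + 1) * h \<le> (real m + real mb + 1) * h" by (intro mono) simp
      have a2: "(real m - real i) * h \<le> (real m - real i + real mb + 1) * h" by (intro mono) simp
      have "tder (n+1) {(real m - real i + real mb + 1) * h .. (real m - real i + real mb + 1) * h + \<epsilon>2} x u = X (n+1) u /\<^sub>R fact (n+1)"
        proof (rule tderX[OF _ _ _ kk uR])
        show "real n * \<tau> \<le> (real m - real i + real mb + 1) * h" using lo a2 by linarith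
        show "(real m - real i + real mb + 1) * h < (real m - real i + real mb + 1) * h + \<epsilon>2" using he2 by linarith
        show "(real m - real i + real mb + 1) * h + \<epsilon>2 \<le> T" using a1 Tb by linarith
      qed
      then show ?thesis using hRt[OF kk i uR] by auto
    qed
  qed
  have hull: "y \<in> box_hull A" if "y \<in> A" for A :: "(real^'d) set" and y
    using that hull_subset[of A is_box] unfolding box_hull_def by blast
  show ?thesis
  proof (rule ballI, intro conjI)
    fix t assume t: "t \<in> {real m * h + \<epsilon>1 .. real (m + mb) * h + \<epsilon>2}"
    have tl: "real n * \<tau> + \<tau> \<le> t"
    proof -
      have "real n * \<tau> + \<tau> = (real n * real p + real p) * h" using \<tau>h by (simp add: algebra_simps)
      also have "\<dots> \<le> real m * h" using npr by (intro mono)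
      finally show ?thesis using t he1 by auto
    qed
    have tu: "t \<le> T"
    proof -
      have "real (m + mb) * h \<le> (real m + real mb + 1) * h" by (intro mono) simp
      then show ?thesis using t Tb by auto
    qed
    have segd: "derivs_on (Suc n) I (seg x t) (\<lambda>j s. X j (t + s))" if "I \<subseteq> {-\<tau>..0}" for I
      unfolding seg_def
    proof (rule derivs_on_shift[OF X])
      fix s assume "s \<in> I" then have "s \<in> {-\<tau>..0}" using that by auto
      then show "t + s \<in> {real n * \<tau>..T}" using tl tu by auto
    qed
    have grid: "gridpt p \<tau> i = - real i * h" for i unfolding gridpt_def h_def by simp
    have pc: "piece p \<tau> i = {- real i * h ..< - real i * h + h}" for i unfolding piece_def grid h_def by simp
    have pcs: "piece p \<tau> i \<subseteq> {-\<tau>..0}" if "i \<in> {1..p}" for i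
    proof -
      have a: "real i * h \<le> real p * h" using that by (intro mono) simp
      have b: "1 * h \<le> real i * h" using that by (intro mono) simp
      show ?thesis unfolding pc
      proof
        fix y assume "y \<in> {- real i * h..<- real i * h + h}"
        then have y1: "- real i * h \<le> y" "y < - real i * h + h" by auto
        show "y \<in> {-\<tau>..0}" unfolding atLeastAtMost_iff using y1 a b \<tau>h by (intro conjI; linarith)
      qed
    qed
    have tderP: "tder k (piece p \<tau> i) (seg x t) u = X k (t + u) /\<^sub>R fact k"
      if "i \<in> {1..p}" "k \<le> n + 1" "u \<in> piece p \<tau> i" for i k u
    proof (rule tder_eq[OF _ _ that(3)])
      show "derivs_on k (piece p \<tau> i) (seg x t) (\<lambda>j s. X j (t + s))"
        by (rule derivs_on_mono[OF segd[OF pcs[OF that(1)]]]) (use that in simp)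
      show "u' islimpt piece p \<tau> i" if "u' \<in> piece p \<tau> i" for u'
        using that hpos unfolding pc by simp
    qed
    show "Cp p \<tau> (\<lambda>_. n) (seg x t)"
      unfolding Cp_def
    proof
      fix i assume i: "i \<in> {1..p}"
      have "{gridpt p \<tau> i .. gridpt p \<tau> i + \<tau> / real p} \<subseteq> {-\<tau>..0}"
      proof -
        have a: "real i * h \<le> real p * h" using i by (intro mono) simp
        have b: "1 * h \<le> real i * h" using i by (intro mono) simp
        show ?thesis unfolding grid h_def[symmetric]
        proof
          fix y assume "y \<in> {- real i * h..- real i * h + h}"
          then have y1: "- real i * h \<le> y" "y \<le> - real i * h + h" by auto
          show "y \<in> {-\<tau>..0}" unfolding atLeastAtMost_iff using y1 a b \<tau>h by (intro conjI; linarith)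
        qed
      qed
      then have "derivs_on (Suc n) {gridpt p \<tau> i .. gridpt p \<tau> i + \<tau> / real p} (seg x t) (\<lambda>j s. X j (t + s))"
        by (rule segd)
      then have "Ck_on (n + 1) {gridpt p \<tau> i .. gridpt p \<tau> i + \<tau> / real p} (seg x t)"
        unfolding Ck_on_def Suc_eq_plus1 by blast
      then show "\<exists>xt. Ck_on (n + 1) {gridpt p \<tau> i .. gridpt p \<tau> i + \<tau> / real p} xt \<and>
                      (\<forall>s\<in>piece p \<tau> i. seg x t s = xt s)" by blast
    qed
    have "derivs_on (Suc n) {-\<tau>..0} (seg x t) (\<lambda>j s. X j (t + s))" by (rule segd) simp
    then show "Ck_on (n + 1) {-\<tau>..0} (seg x t)" unfolding Ck_on_def Suc_eq_plus1 by blast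
    have tt: "real m * h + \<epsilon>1 \<le> t" "t \<le> real m * h + real mb * h + \<epsilon>2"
      using t by (auto simp: distrib_right)
    have e1: "(real m - real i) * h = real m * h - real i * h" for i by (simp add: left_diff_distrib)
    have e2: "(real m - real i + real mb) * h = real m * h - real i * h + real mb * h" for i by (simp add: algebra_simps)
    have e4: "(real m - real i + real mb + 1) * h = real m * h - real i * h + real mb * h + h" for i by (simp add: algebra_simps)
    show "z_fun (seg x t) \<in> box_hull (L 0 0 \<union> (\<Union>j\<in>{1..<mb}. C 0 0 j) \<union> R 0 0)"
    proof (rule hull)
      have tS: "t \<in> S" unfolding S_def atLeastAtMost_iff using tl tu h\<tau> by (intro conjI; linarith)
      have "X 0 t /\<^sub>R fact 0 \<in> L 0 0 \<union> (\<Union>j\<in>{1..<mb}. C 0 0 j) \<union> R 0 0"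
      proof (rule claimA)
        show "t \<in> {(real m - real 0) * h + \<epsilon>1 .. (real m - real 0 + real mb) * h + \<epsilon>2}"
          unfolding atLeastAtMost_iff e1 e2 using tt by (intro conjI; linarith)
      qed simp_all
      then show "z_fun (seg x t) \<in> L 0 0 \<union> (\<Union>j\<in>{1..<mb}. C 0 0 j) \<union> R 0 0"
        using X0[OF tS] by (simp add: z_fun_def seg_def)
    qed
    show "\<forall>i\<in>{1..p}. \<forall>k\<le>n. j_fun p \<tau> i k (seg x t) \<in> box_hull (L k i \<union> (\<Union>j\<in>{1..<mb}. C k i j) \<union> R k i)"
    proof (intro ballI allI impI)
      fix i k assume i: "i \<in> {1..p}" and k: "k \<le> n"
      have gp: "gridpt p \<tau> i \<in> piece p \<tau> i" unfolding pc grid using hpos by simp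
      have "j_fun p \<tau> i k (seg x t) = X k (t - real i * h) /\<^sub>R fact k"
        unfolding j_fun_def using tderP[OF i _ gp] k by (simp add: grid)
      moreover have "X k (t - real i * h) /\<^sub>R fact k \<in> L k i \<union> (\<Union>j\<in>{1..<mb}. C k i j) \<union> R k i"
      proof (rule claimA)
        show "t - real i * h \<in> {(real m - real i) * h + \<epsilon>1 .. (real m - real i + real mb) * h + \<epsilon>2}"
          unfolding atLeastAtMost_iff e1 e2 using tt by (intro conjI; linarith)
      qed (use i k in auto)
      ultimately show "j_fun p \<tau> i k (seg x t) \<in> box_hull (L k i \<union> (\<Union>j\<in>{1..<mb}. C k i j) \<union> R k i)" using hull by simp
    qed
    show "\<forall>i\<in>{1..p}. \<forall>s\<in>{0..<h}. xi_fun p \<tau> n i (seg x t) s \<in>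
                box_hull (L (n+1) i \<union> (\<Union>j\<in>{1..mb}. C (n+1) i j) \<union> Rt (n+1) i)"
    proof (intro ballI)
      fix i s assume i: "i \<in> {1..p}" and s: "s \<in> {0..<h}"
      have gp: "gridpt p \<tau> i + s \<in> piece p \<tau> i" unfolding pc grid using s by simp
      have "xi_fun p \<tau> n i (seg x t) s = X (n+1) (t - real i * h + s) /\<^sub>R fact (n+1)"
      proof -
        have e: "t + (gridpt p \<tau> i + s) = t - real i * h + s" by (simp add: grid)
        show ?thesis unfolding xi_fun_def tderP[OF i _ gp, of "Suc n", simplified] e by simp
      qed
      moreover have "X (n+1) (t - real i * h + s) /\<^sub>R fact (n+1) \<in> L (n+1) i \<union> (\<Union>j\<in>{1..mb}. C (n+1) i j) \<union> Rt (n+1) i"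
      proof (rule claimB)
        have s1: "0 \<le> s" "s < h" using s by auto
        show "t - real i * h + s \<in> {(real m - real i) * h + \<epsilon>1 .. (real m - real i + real mb + 1) * h + \<epsilon>2}"
          unfolding atLeastAtMost_iff e1 e4 using tt s1 by (intro conjI; linarith)
      qed (use i in auto)
      ultimately show "xi_fun p \<tau> n i (seg x t) s \<in> box_hull (L (n+1) i \<union> (\<Union>j\<in>{1..mb}. C (n+1) i j) \<union> Rt (n+1) i)" using hull by simp
    qed
  qed
qed


end
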